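(* Let $\gamma\subset\mathbb{R}^2$ be a circle of center $\boldsymbol{c}$ and radius $R=1/\kappa>0$, and let $\boldsymbol{x}\in\mathbb{R}^2\setminus\gamma$ with distance $r=|\|\boldsymbol{x}-\boldsymbol{c}\|_2-R|>0$ to $\gamma$, and assume $r\kappa<1$. Let $\boldsymbol{n}$ be the unit vector pointing from $\boldsymbol{x}$ to its closest point on $\gamma$, and let $\mathcal{T}$ be the tangent line to $\gamma$ at that closest point. Let $\boldsymbol{v}$ be a unit vector making an angle $\theta\in[0,\pi/2)$ with $\boldsymbol{n}$, let $\boldsymbol{u}=\frac{r}{\cos\theta}\boldsymbol{v}$ (so $\boldsymbol{x}+\boldsymbol{u}\in\mathcal{T}$), and let $\boldsymbol{x}_\gamma=\boldsymbol{x}+t\boldsymbol{v}$ where $t$ is the smallest $t\ge0$ with $\boldsymbol{x}+t\boldsymbol{v}\in\gamma$ (whenever such $t$ exists). Then: (i) whenever $\boldsymbol{x}_\gamma$ exists, $\displaystyle -C_1 r\kappa\tan^2\theta\le\frac{\|\boldsymbol{x}_\gamma-\boldsymbol{x}\|_2}{\|\boldsymbol{u}\|_2}-1$; (ii) if moreover $\tan^2\theta\le\frac{0.2}{r\kappa}$, then $\boldsymbol{x}_\gamma$ exists and $\displaystyle\frac{\|\boldsymbol{x}_\gamma-\boldsymbol{x}\|_2}{\|\boldsymbol{u}\|_2}-1\le C_2r\kappa\tan^2\theta$, with $C_1=0.625$ and $C_2=2.25$. *)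

theory Defs
  imports "HOL-Analysis.Analysis"
begin

definition closest_pt :: "real^2 \<Rightarrow> real \<Rightarrow> real^2 \<Rightarrow> real^2" where
  "closest_pt c R x = c + (R / norm (x - c)) *\<^sub>R (x - c)"

definition first_hit :: "real^2 \<Rightarrow> real \<Rightarrow> real^2 \<Rightarrow> real^2 \<Rightarrow> real^2 \<Rightarrow> bool" where
  "first_hit c R x v y \<longleftrightarrow> (\<exists>t\<ge>0. y = x + t *\<^sub>R v \<and> y \<in> sphere c R \<and>
      (\<forall>s. 0 \<le> s \<and> s < t \<longrightarrow> x + s *\<^sub>R v \<notin> sphere c R))"

end

theory Submission
  imports Defs
begin

lemma inP: fixes e T p :: real assumes "0<e" "e<1" "T\<ge>0" "p\<ge>0" and eq: "p^2*e*(1+T) + 2*(1-e)*p - (2-e) = 0"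
 shows "p \<le> 1" "p \<ge> 1 - 0.625*e*T"
proof -
  have P: "e*(1+T)*(p+1)+2*(1-e) > 0" using assms by (simp add: add_pos_nonneg)
  have "(p-1)*(e*(1+T)*(p+1)+2*(1-e)) = -e*T" using eq by (simp add: algebra_simps power2_eq_square)
  moreover have "e*T \<ge> 0" using assms by simp
  ultimately have "(p-1)*(e*(1+T)*(p+1)+2*(1-e)) \<le> 0" by simp
  thus p1: "p \<le> 1" using P by (simp add: mult_le_0_iff)
  define a where "a = e*T/2"
  define d where "d = 1 - p"
  have g: "e*(1+T)*d^2 - 2*(1+e*T)*d + e*T = 0" using eq unfolding d_def by (simp add: algebra_simps power2_eq_square)
  have "d \<le> a"
  proof (cases "a \<ge> 1")
    case True then show ?thesis using assms d_def by simp
  next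
    case False
    have "e*(1+T) < 4" using False assms a_def by (simp add: algebra_simps)
    hence ga: "e*(1+T)*a^2 - 2*(1+e*T)*a + e*T \<le> 0"
    proof -
      have "e*(1+T)*a^2 - 2*(1+e*T)*a + e*T = (e*T)^2/4 * (e*(1+T) - 4)"
        unfolding a_def by (simp add: algebra_simps power2_eq_square)
      also have "\<dots> \<le> 0" using \<open>e*(1+T) < 4\<close> by (intro mult_nonneg_nonpos) auto
      finally show ?thesis .
    qed
    have g1: "e*(1+T)*1^2 - 2*(1+e*T)*1 + e*T < 0" using assms by (simp add: algebra_simps)
    have id: "(1-a)*(e*(1+T)*d^2 - 2*(1+e*T)*d + e*T) = (1-d)*(e*(1+T)*a^2 - 2*(1+e*T)*a + e*T)
       + (d-a)*(e*(1+T)*1^2 - 2*(1+e*T)*1 + e*T) + e*(1+T)*(d-a)*(d-1)*(1-a)"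
      by (simp add: algebra_simps power2_eq_square)
    show ?thesis
    proof (rule ccontr)
      assume "\<not> d \<le> a"
      hence da: "d > a" by simp
      have "d \<le> 1" using assms d_def by simp
      have t1: "(1-d)*(e*(1+T)*a^2 - 2*(1+e*T)*a + e*T) \<le> 0" using ga \<open>d\<le>1\<close> by (simp add: mult_nonneg_nonpos)
      have t2: "(d-a)*(e*(1+T)*1^2 - 2*(1+e*T)*1 + e*T) < 0" using g1 da by (simp add: mult_pos_neg)
      have t3: "e*(1+T)*(d-a)*(d-1)*(1-a) \<le> 0"
      proof -
        have "e*(1+T)*(d-a) \<ge> 0" using assms da by simp
        moreover have "(d-1)*(1-a) \<le> 0" using \<open>d\<le>1\<close> False by (simp add: mult_nonpos_nonneg)
        ultimately show ?thesis by (metis mult.assoc mult_nonneg_nonpos)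
      qed
      have "(1-a)*(e*(1+T)*d^2 - 2*(1+e*T)*d + e*T) < 0" unfolding id using t1 t2 t3 by linarith
      thus False using g by simp
    qed
  qed
  moreover have "a \<le> 0.625*e*T"
  proof -
    have "e*T \<ge> 0" using assms by simp
    moreover have "\<And>k::real. k \<ge> 0 \<Longrightarrow> k/2 \<le> 0.625*k" by simp
    ultimately show ?thesis unfolding a_def by (metis mult.assoc)
  qed
  ultimately show "p \<ge> 1 - 0.625*e*T" using d_def by simp
qed

lemma outP: fixes e T p :: real assumes "0<e" "T\<ge>0" "p\<ge>0" and eq: "p^2*e*(1+T) - 2*(1+e)*p + (2+e) = 0"
  and V: "e*(1+T)*p \<le> 1+e"
 shows "p \<ge> 1" "p - 1 \<le> 2.25*e*T"
proof -
  have "(e*(1+T)*p - (1+e))^2 - (1+e)^2 + e*(1+T)*(2+e) = e*(1+T)*(p^2*e*(1+T) - 2*(1+e)*p + (2+e))"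
    by (simp add: algebra_simps power2_eq_square)
  hence "(1+e)^2 - e*(1+T)*(2+e) = (e*(1+T)*p - (1+e))^2" using eq by simp
  hence "(1+e)^2 - e*(1+T)*(2+e) \<ge> 0" by simp
  hence h: "e*T*(2+e) \<le> 1" by (simp add: algebra_simps power2_eq_square)
  have eT0: "e*T \<ge> 0" using assms by simp
  have "e*T*2 \<le> e*T*(2+e)" using eT0 assms by (intro mult_left_mono) auto
  hence eT: "e*T \<le> 1/2" using h by simp
  define F where "F = 2*(1+e) - e*(1+T)*(p+1)"
  have "F \<ge> 1 - e*T" using V unfolding F_def by (simp add: algebra_simps)
  hence F: "F \<ge> 1/2" using eT by simp
  have pf: "(p-1)*F = e*T" using eq unfolding F_def by (simp add: algebra_simps power2_eq_square)
  have "(p-1)*F \<ge> 0" using pf eT0 by simp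
  then show "p \<ge> 1" using F by (simp add: zero_le_mult_iff)
  have "(p-1)*(1/2) \<le> (p-1)*F" using F \<open>p\<ge>1\<close> by (intro mult_left_mono) auto
  thus "p - 1 \<le> 2.25*e*T" using pf eT0 by simp
qed

theorem lemma4:
  fixes c x v :: "real^2" and R \<kappa> r \<theta> :: real
  assumes "R > 0" and "\<kappa> = 1 / R"
    and "x \<notin> sphere c R"
    and "r = \<bar>norm (x - c) - R\<bar>" and "r > 0" and "r * \<kappa> < 1"
    and "norm v = 1" and "0 \<le> \<theta>" and "\<theta> < pi / 2"
    and "v \<bullet> ((closest_pt c R x - x) /\<^sub>R norm (closest_pt c R x - x)) = cos \<theta>"
  shows "(\<forall>y. first_hit c R x v y \<longrightarrow>
            - 0.625 * r * \<kappa> * (tan \<theta>)\<^sup>2 \<le> norm (y - x) / norm ((r / cos \<theta>) *\<^sub>R v) - 1)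
       \<and> ((tan \<theta>)\<^sup>2 \<le> 0.2 / (r * \<kappa>) \<longrightarrow>
            (\<exists>y. first_hit c R x v y) \<and>
            (\<forall>y. first_hit c R x v y \<longrightarrow>
               norm (y - x) / norm ((r / cos \<theta>) *\<^sub>R v) - 1 \<le> 2.25 * r * \<kappa> * (tan \<theta>)\<^sup>2))"
proof -
  define d where "d = norm (x - c)"
  define co where "co = cos \<theta>"
  define T where "T = (tan \<theta>)^2"
  define b where "b = v \<bullet> (x - c)"
  define e where "e = r * \<kappa>"
  have co: "co > 0" unfolding co_def using assms(8,9) by (intro cos_gt_zero_pi) auto
  have Tco: "T * co^2 = 1 - co^2" unfolding T_def co_def tan_def using co co_def
    by (simp add: power_divide sin_squared_eq)
  have T1: "1 + T = 1/co^2" using Tco co by (simp add: field_simps)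
  have T0: "T \<ge> 0" unfolding T_def by simp
  have dR: "d \<noteq> R" using assms(3) unfolding d_def by (simp add: dist_norm norm_minus_commute)
  have rd: "r = \<bar>d - R\<bar>" using assms(4) d_def by simp
  have e: "e = r / R" using assms(2) e_def by simp
  have d0: "d > 0"
  proof (rule ccontr)
    assume "\<not> d > 0"
    hence "d = 0" unfolding d_def by simp
    hence "r = R" using rd assms(1) by simp
    thus False using assms(1,2,6) by simp
  qed
  have cp: "closest_pt c R x - x = (R/d - 1) *\<^sub>R (x - c)"
    unfolding closest_pt_def d_def by (simp add: algebra_simps)
  have ncp: "norm (closest_pt c R x - x) = r"
  proof -
    have "norm (closest_pt c R x - x) = \<bar>R/d - 1\<bar> * d" unfolding cp d_def by simp
    also have "\<dots> = \<bar>R - d\<bar>" using d0 by (simp add: abs_mult_pos' field_simps abs_divide)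
    finally show ?thesis using rd by simp
  qed
  have bv: "(R/d - 1)/r * b = co"
  proof -
    have "v \<bullet> ((closest_pt c R x - x) /\<^sub>R r) = co" using assms(10) ncp co_def by simp
    thus ?thesis unfolding cp b_def by (simp add: inner_scaleR_right divide_inverse mult.commute mult.left_commute)
  qed
  have vv: "v \<bullet> v = 1" using assms(7) by (simp add: norm_eq_1)
  have nsq: "\<And>s. (norm (x + s *\<^sub>R v - c))^2 = s^2 + 2 * s * b + d^2"
  proof -
    fix s
    have xe: "x + s *\<^sub>R v - c = (x - c) + s *\<^sub>R v" by simp
    have "(norm (x + s *\<^sub>R v - c))^2 = ((x - c) + s *\<^sub>R v) \<bullet> ((x - c) + s *\<^sub>R v)"
      unfolding xe by (simp add: power2_norm_eq_inner)
    also have "\<dots> = (x-c)\<bullet>(x-c) + 2 * s * (v \<bullet> (x-c)) + s^2*(v\<bullet>v)"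
      by (simp add: inner_add_left inner_add_right inner_commute power2_eq_square algebra_simps)
    finally show "(norm (x + s *\<^sub>R v - c))^2 = s^2 + 2 * s * b + d^2"
      using vv unfolding b_def d_def by (simp add: power2_norm_eq_inner)
  qed
  have sph: "\<And>s. x + s *\<^sub>R v \<in> sphere c R \<longleftrightarrow> s^2 + 2 * s * b + d^2 - R^2 = 0"
  proof -
    fix s
    have "x + s *\<^sub>R v \<in> sphere c R \<longleftrightarrow> norm (x + s *\<^sub>R v - c) = R"
      by (simp add: dist_norm norm_minus_commute)
    also have "\<dots> \<longleftrightarrow> (norm (x + s *\<^sub>R v - c))^2 = R^2"
      using assms(1) by (metis norm_ge_zero power2_eq_iff_nonneg less_imp_le)
    finally show "x + s *\<^sub>R v \<in> sphere c R \<longleftrightarrow> s^2 + 2 * s * b + d^2 - R^2 = 0"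
      using nsq by simp
  qed
  have hit: "\<And>y. first_hit c R x v y \<Longrightarrow> \<exists>t\<ge>0. t^2 + 2*t*b + d^2 - R^2 = 0 \<and>
      (\<forall>s. 0 \<le> s \<and> s < t \<longrightarrow> s^2 + 2 * s * b + d^2 - R^2 \<noteq> 0) \<and>
      norm (y - x) / norm ((r / cos \<theta>) *\<^sub>R v) = t * co / r"
  proof -
    fix y assume "first_hit c R x v y"
    then obtain t where t: "t \<ge> 0" "y = x + t *\<^sub>R v" "y \<in> sphere c R"
      "\<forall>s. 0 \<le> s \<and> s < t \<longrightarrow> x + s *\<^sub>R v \<notin> sphere c R" unfolding first_hit_def by blast
    have "norm (y - x) = t" using t assms(7) by simp
    moreover have "norm ((r / cos \<theta>) *\<^sub>R v) = r/co" using assms(5,7) co co_def by simp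
    ultimately have "norm (y - x) / norm ((r / cos \<theta>) *\<^sub>R v) = t * co / r" by simp
    thus "?thesis y" using t sph by metis
  qed
  have r0: "r \<noteq> 0" "R \<noteq> 0" "co \<noteq> 0" using assms(1,5) co by auto
  have e01: "0 < e" "e < 1" using assms(1,2,5,6) e_def by auto
  have cond: "(tan \<theta>)\<^sup>2 \<le> 0.2 / (r * \<kappa>) \<longleftrightarrow> e * T \<le> 0.2"
    unfolding e_def[symmetric] T_def[symmetric] using e01 by (simp add: pos_le_divide_eq mult.commute mult.assoc)
  have goalform: "\<And>p. - 0.625 * r * \<kappa> * (tan \<theta>)\<^sup>2 \<le> p - 1 \<longleftrightarrow> p \<ge> 1 - 0.625 * e * T"
     "\<And>p. p - 1 \<le> 2.25 * r * \<kappa> * (tan \<theta>)\<^sup>2 \<longleftrightarrow> p - 1 \<le> 2.25 * e * T"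
    unfolding e_def T_def by (simp_all add: algebra_simps)
  have mk: "\<And>t. t \<ge> 0 \<Longrightarrow> t^2 + 2 * t * b + d^2 - R^2 = 0 \<Longrightarrow>
      (\<forall>s. 0 \<le> s \<and> s < t \<longrightarrow> s^2 + 2 * s * b + d^2 - R^2 \<noteq> 0) \<Longrightarrow> first_hit c R x v (x + t *\<^sub>R v)"
  proof -
    fix t assume a: "t \<ge> 0" "t^2 + 2 * t * b + d^2 - R^2 = 0"
      "\<forall>s. 0 \<le> s \<and> s < t \<longrightarrow> s^2 + 2 * s * b + d^2 - R^2 \<noteq> 0"
    show "first_hit c R x v (x + t *\<^sub>R v)" unfolding first_hit_def sph
      using a by (intro exI[of _ t]) auto
  qed
  define D where "D = b^2 - d^2 + R^2"
  have eqD: "\<And>s. s^2 + 2 * s * b + d^2 - R^2 = 0 \<longleftrightarrow> (s + b)^2 = D"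
    unfolding D_def by (simp add: algebra_simps power2_eq_square)
  have rootD: "\<And>s. D \<ge> 0 \<Longrightarrow> s^2 + 2 * s * b + d^2 - R^2 = 0 \<Longrightarrow> s + b = sqrt D \<or> s + b = - sqrt D"
  proof -
    fix s assume "D \<ge> 0" "s^2 + 2 * s * b + d^2 - R^2 = 0"
    hence "(s + b)^2 = (sqrt D)^2" using eqD by simp
    thus "s + b = sqrt D \<or> s + b = - sqrt D" by (simp only: power2_eq_iff)
  qed
  have isroot: "\<And>s. D \<ge> 0 \<Longrightarrow> (s + b = sqrt D \<or> s + b = - sqrt D) \<Longrightarrow> s^2 + 2 * s * b + d^2 - R^2 = 0"
  proof -
    fix s assume h: "D \<ge> 0" "s + b = sqrt D \<or> s + b = - sqrt D"
    have "(s + b)^2 = (sqrt D)^2" using h(2) by (metis power2_minus)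
    hence "(s + b)^2 = D" using h(1) by simp
    thus "s^2 + 2 * s * b + d^2 - R^2 = 0" using eqD by blast
  qed
  have rR: "r < R" using e01 e assms(1) by (simp add: divide_less_eq)
  have pos: "\<And>t. t \<ge> 0 \<Longrightarrow> t * co / r \<ge> 0" using co assms(5) by simp
  show ?thesis
  proof (cases "d < R")
    case True
    have dd: "d = R - r" using rd True by simp
    have "R/d - 1 = r/d" using dd d0 by (simp add: field_simps)
    hence k: "(R/d - 1)/r = 1/d" using assms(5) by simp
    have "1/d * b = co" using bv k by simp
    hence bb: "b = d * co" using d0 by (simp add: field_simps)
    have eqp: "\<And>t. t^2 + 2 * t * b + d^2 - R^2 = 0 \<Longrightarrow>
        (t * co / r)^2*e*(1+T) + 2*(1-e)*(t * co / r) - (2-e) = 0"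
    proof -
      fix t assume h: "t^2 + 2 * t * b + d^2 - R^2 = 0"
      have "(t * co / r)^2*e*(1+T) + 2*(1-e)*(t * co / r) - (2-e) = (t^2 + 2 * t * b + d^2 - R^2)/(r*R)"
        unfolding e T1 bb dd using r0 by (simp add: field_simps power2_eq_square)
      thus "(t * co / r)^2*e*(1+T) + 2*(1-e)*(t * co / r) - (2-e) = 0" using h by simp
    qed
    have resI: "\<And>y. first_hit c R x v y \<Longrightarrow>
        norm (y - x) / norm ((r / cos \<theta>) *\<^sub>R v) \<le> 1 \<and>
        norm (y - x) / norm ((r / cos \<theta>) *\<^sub>R v) \<ge> 1 - 0.625 * e * T"
    proof -
      fix y assume "first_hit c R x v y"
      then obtain t where t: "t \<ge> 0" "t^2 + 2 * t * b + d^2 - R^2 = 0"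
        "norm (y - x) / norm ((r / cos \<theta>) *\<^sub>R v) = t * co / r" using hit by blast
      show "norm (y - x) / norm ((r / cos \<theta>) *\<^sub>R v) \<le> 1 \<and>
        norm (y - x) / norm ((r / cos \<theta>) *\<^sub>R v) \<ge> 1 - 0.625 * e * T"
        unfolding t(3) using inP[OF e01 T0 pos[OF t(1)] eqp[OF t(2)]] by simp
    qed
    have ex: "\<exists>y. first_hit c R x v y"
    proof -
      have b0: "b \<ge> 0" using bb d0 co by simp
      have "D > b^2" unfolding D_def using True d0 by (simp add: power_strict_mono)
      hence Dp: "D \<ge> 0" and sD: "sqrt D > b"
        using b0 apply (smt (verit) zero_le_power2)
        using b0 \<open>D > b^2\<close> by (metis abs_of_nonneg real_sqrt_abs real_sqrt_less_mono)
      define t0 where "t0 = sqrt D - b"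
      have "t0 \<ge> 0" using sD t0_def by simp
      moreover have "t0^2 + 2 * t0 * b + d^2 - R^2 = 0" by (rule isroot[OF Dp]) (simp add: t0_def)
      moreover have "\<forall>s. 0 \<le> s \<and> s < t0 \<longrightarrow> s^2 + 2 * s * b + d^2 - R^2 \<noteq> 0"
      proof (intro allI impI notI)
        fix s assume s: "0 \<le> s \<and> s < t0" "s^2 + 2 * s * b + d^2 - R^2 = 0"
        from rootD[OF Dp s(2)] show False using s(1) t0_def b0 sD by auto
      qed
      ultimately show ?thesis using mk by blast
    qed
    have "0 \<le> 2.25*e*T" using T0 e01 by simp
    then show ?thesis unfolding goalform cond using resI ex by fastforce
  next
    case False
    hence dd: "d = R + r" using rd dR by simp
    have "R/d - 1 = -r/d" using dd d0 by (simp add: field_simps)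
    hence k: "(R/d - 1)/r = -1/d" using assms(5) by simp
    have "-1/d * b = co" using bv k by simp
    hence bb: "b = - d * co" using d0 by (simp add: field_simps)
    have eqp: "\<And>t. t^2 + 2 * t * b + d^2 - R^2 = 0 \<Longrightarrow>
        (t * co / r)^2*e*(1+T) - 2*(1+e)*(t * co / r) + (2+e) = 0"
    proof -
      fix t assume h: "t^2 + 2 * t * b + d^2 - R^2 = 0"
      have "(t * co / r)^2*e*(1+T) - 2*(1+e)*(t * co / r) + (2+e) = (t^2 + 2 * t * b + d^2 - R^2)/(r*R)"
        unfolding e T1 bb dd using r0 by (simp add: field_simps power2_eq_square)
      thus "(t * co / r)^2*e*(1+T) - 2*(1+e)*(t * co / r) + (2+e) = 0" using h by simp
    qed
    have dRsq: "d^2 > R^2" using False dR assms(1) by (simp add: power_strict_mono)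
    have resO: "\<And>y. first_hit c R x v y \<Longrightarrow>
        norm (y - x) / norm ((r / cos \<theta>) *\<^sub>R v) \<ge> 1 \<and>
        norm (y - x) / norm ((r / cos \<theta>) *\<^sub>R v) - 1 \<le> 2.25 * e * T"
    proof -
      fix y assume "first_hit c R x v y"
      then obtain t where t: "t \<ge> 0" "t^2 + 2 * t * b + d^2 - R^2 = 0"
        "\<forall>s. 0 \<le> s \<and> s < t \<longrightarrow> s^2 + 2 * s * b + d^2 - R^2 \<noteq> 0"
        "norm (y - x) / norm ((r / cos \<theta>) *\<^sub>R v) = t * co / r" using hit by blast
      have tle: "t \<le> d * co"
      proof (rule ccontr)
        assume "\<not> t \<le> d * co"
        define s where "s = 2 * d * co - t"
        have "s^2 + 2 * s * b + d^2 - R^2 = t^2 + 2 * t * b + d^2 - R^2"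
          unfolding s_def bb by (simp add: algebra_simps power2_eq_square)
        hence es: "s^2 + 2 * s * b + d^2 - R^2 = 0" using t(2) by simp
        have "s \<ge> 0"
        proof (rule ccontr)
          assume "\<not> s \<ge> 0"
          hence "t - 2 * d * co > 0" unfolding s_def by simp
          hence "t * (t - 2 * d * co) \<ge> 0" using t(1) by simp
          moreover have "t^2 + 2 * t * b + d^2 - R^2 = t * (t - 2 * d * co) + (d^2 - R^2)"
            unfolding bb by (simp add: algebra_simps power2_eq_square)
          ultimately show False using t(2) dRsq by simp
        qed
        moreover have "s < t" using \<open>\<not> t \<le> d * co\<close> s_def by simp
        ultimately show False using t(3) es by blast
      qed
      have V: "e*(1+T)*(t * co / r) \<le> 1+e"
      proof -
        have "e*(1+T)*(t * co / r) = t/(R*co)" unfolding e T1 using r0 by (simp add: field_simps power2_eq_square)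
        moreover have "1 + e = d/R" unfolding e dd using r0 by (simp add: field_simps)
        moreover have "t/(R*co) \<le> d/R" using tle co assms(1) by (simp add: field_simps)
        ultimately show ?thesis by simp
      qed
      note o = outP[OF e01(1) T0 pos[OF t(1)] eqp[OF t(2)] V]
      show "norm (y - x) / norm ((r / cos \<theta>) *\<^sub>R v) \<ge> 1 \<and>
        norm (y - x) / norm ((r / cos \<theta>) *\<^sub>R v) - 1 \<le> 2.25 * e * T"
        unfolding t(4) using o by simp
    qed
    have ex: "e * T \<le> 0.2 \<Longrightarrow> \<exists>y. first_hit c R x v y"
    proof -
      assume eT: "e * T \<le> 0.2"
      have b0: "b \<le> 0" using bb d0 co by simp
      have rT: "r * T \<le> 0.2 * R" using eT unfolding e using assms(1) by (simp add: field_simps)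
      have "r * T * (2*R + r) \<le> 0.2 * R * (2*R + r)" using rT assms(1,5) by (intro mult_right_mono) auto
      moreover have "0.2 * R * (2*R + r) \<le> R^2"
      proof -
        have h1: "R * r \<le> R * R" using rR assms(1) by simp
        have h2: "R * R \<ge> 0" by simp
        have h3: "0.2 * R * (2*R + r) = (2*(R*R) + R*r)/5" by (simp add: algebra_simps)
        have h4: "R^2 = R*R" by (simp add: power2_eq_square)
        have h5: "2*(R*R) + R*r \<le> 5*(R*R)" using h1 h2 by linarith
        have "(2*(R*R) + R*r)/5 \<le> R*R" using h5 by (simp add: divide_le_eq mult.commute)
        thus ?thesis unfolding h3 h4 .
      qed
      ultimately have "r * T * (2*R + r) \<le> R^2" by linarith
      hence "(R+r)^2 * T \<le> R^2 * (1+T)" by (simp add: algebra_simps power2_eq_square)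
      hence "(R+r)^2 * T * co^2 \<le> R^2 * (1+T) * co^2" using co by (simp add: mult_right_mono)
      also have "\<dots> = R^2" unfolding T1 using r0 by simp
      finally have h: "(R+r)^2 * T * co^2 \<le> R^2" .
      have "D = R^2 - d^2 * (1 - co^2)" unfolding D_def bb by (simp add: algebra_simps power2_eq_square)
      hence "D = R^2 - d^2 * (T * co^2)" unfolding Tco .
      hence Dp: "D \<ge> 0" using h dd by (simp add: algebra_simps)
      have "D \<le> b^2" unfolding D_def using dRsq by simp
      hence sD: "sqrt D \<le> - b" using b0 by (metis abs_of_nonpos real_sqrt_abs real_sqrt_le_mono)
      define t0 where "t0 = - b - sqrt D"
      have "t0 \<ge> 0" using sD t0_def by simp
      moreover have "t0^2 + 2 * t0 * b + d^2 - R^2 = 0" by (rule isroot[OF Dp]) (simp add: t0_def)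
      moreover have "\<forall>s. 0 \<le> s \<and> s < t0 \<longrightarrow> s^2 + 2 * s * b + d^2 - R^2 \<noteq> 0"
      proof (intro allI impI notI)
        fix s assume s: "0 \<le> s \<and> s < t0" "s^2 + 2 * s * b + d^2 - R^2 = 0"
        from rootD[OF Dp s(2)] show False using s(1) t0_def real_sqrt_ge_zero[OF Dp] by auto
      qed
      ultimately show ?thesis using mk by blast
    qed
    have "0 \<le> 0.625*e*T" using T0 e01 by simp
    then show ?thesis unfolding goalform cond using resO ex by fastforce
  qed
qed

end
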